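(* Let $I:(0,1)\to(0,1)$ be an increasing bijection satisfying $I(2t)\approx I(t)$ for $t\in(0,\frac12)$, and let $X$ be an r.i. space. Define $\|f\|_Z:=\|S_If\|_X$ for measurable $f$ on $(0,1)$. Then $\|\cdot\|_Z$ is an r.i.q. norm, and, denoting by $Z$ the corresponding r.i.q. space, $S_I$ is bounded on $Z$. If moreover $\int_0^t\frac{ds}{I(s)}\lesssim\frac{t}{I(t)}$ for $t\in(0,1)$, then $\|\cdot\|_Z$ is equivalent to an r.i. norm, so $Z$ is an r.i. space.
   Context: $f^*$: nonincreasing rearrangement on $(0,1)$; $S_If(t)=\frac1{I(t)}\sup_{0<s\le t}I(s)f^*(s)$. An r.i. norm $\rho$ on nonnegative measurable functions on $(0,1)$ is a norm with $\rho(f)=0$ iff $f=0$ a.e., the lattice property, the Fatou property ($f_n\nearrow f$ a.e. $\Rightarrow\rho(f_n)\nearrow\rho(f)$), $\rho(\chi_{(0,1)})<\infty$, $\int_0^1f\lesssim\rho(f)$ and $\rho(f)=\rho(f^* )$; an r.i. space is the space of $f$ with $\rho(|f|)<\infty$. An r.i.q. norm satisfies the same except the last-but-one, with the triangle inequality replaced by $\rho(f+g)\le C(\rho(f)+\rho(g))$ for some $C\ge1$. $S_I$ bounded on $Z$ means $\|S_If\|_Z\lesssim\|f\|_Z$. *)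

theory Defs
  imports "HOL-Analysis.Analysis"
begin

text \<open>Nonnegative functions on (0,1) are modelled as functions real => ennreal;
  only their values on (0,1) matter (measurability, a.e. statements and
  integrals all refer to Lebesgue measure restricted to (0,1)).\<close>

abbreviation unitI :: "real set" where "unitI \<equiv> {0<..<1}"

definition meas01 :: "(real \<Rightarrow> ennreal) \<Rightarrow> bool" where
  "meas01 f \<longleftrightarrow> f \<in> borel_measurable (lebesgue_on unitI)"

definition distrib_fun :: "(real \<Rightarrow> ennreal) \<Rightarrow> ennreal \<Rightarrow> ennreal" where
  "distrib_fun f y = emeasure lebesgue {t \<in> unitI. y < f t}"

definition rearr :: "(real \<Rightarrow> ennreal) \<Rightarrow> real \<Rightarrow> ennreal" where
  "rearr f t = Inf {y. distrib_fun f y \<le> ennreal t}"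

definition S_op :: "(real \<Rightarrow> real) \<Rightarrow> (real \<Rightarrow> ennreal) \<Rightarrow> real \<Rightarrow> ennreal" where
  "S_op I f t = (SUP s\<in>{0<..t}. ennreal (I s) * rearr f s) / ennreal (I t)"

definition ri_common :: "((real \<Rightarrow> ennreal) \<Rightarrow> ennreal) \<Rightarrow> bool" where
  "ri_common \<rho> \<longleftrightarrow>
     (\<forall>f a. meas01 f \<and> 0 \<le> a \<longrightarrow> \<rho> (\<lambda>t. ennreal a * f t) = ennreal a * \<rho> f) \<and>
     (\<forall>f. meas01 f \<longrightarrow> (\<rho> f = 0 \<longleftrightarrow> (AE t in lebesgue_on unitI. f t = 0))) \<and>
     (\<forall>f g. meas01 f \<and> meas01 g \<and> (AE t in lebesgue_on unitI. g t \<le> f t) \<longrightarrow> \<rho> g \<le> \<rho> f) \<and>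
     (\<forall>F f. (\<forall>n. meas01 (F n)) \<and> meas01 f \<and>
        (AE t in lebesgue_on unitI. incseq (\<lambda>n. F n t) \<and> (\<lambda>n. F n t) \<longlonglongrightarrow> f t)
        \<longrightarrow> incseq (\<lambda>n. \<rho> (F n)) \<and> (\<lambda>n. \<rho> (F n)) \<longlonglongrightarrow> \<rho> f) \<and>
     \<rho> (indicator unitI) < \<infinity> \<and>
     (\<forall>f. meas01 f \<longrightarrow> \<rho> f = \<rho> (rearr f))"

definition ri_norm :: "((real \<Rightarrow> ennreal) \<Rightarrow> ennreal) \<Rightarrow> bool" where
  "ri_norm \<rho> \<longleftrightarrow> ri_common \<rho> \<and>
     (\<forall>f g. meas01 f \<and> meas01 g \<longrightarrow> \<rho> (\<lambda>t. f t + g t) \<le> \<rho> f + \<rho> g) \<and>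
     (\<exists>C::real. \<forall>f. meas01 f \<longrightarrow> (\<integral>\<^sup>+ t\<in>unitI. f t \<partial>lebesgue) \<le> ennreal C * \<rho> f)"

definition riq_norm :: "((real \<Rightarrow> ennreal) \<Rightarrow> ennreal) \<Rightarrow> bool" where
  "riq_norm \<rho> \<longleftrightarrow> ri_common \<rho> \<and>
     (\<exists>C::real. C \<ge> 1 \<and> (\<forall>f g. meas01 f \<and> meas01 g \<longrightarrow>
        \<rho> (\<lambda>t. f t + g t) \<le> ennreal C * (\<rho> f + \<rho> g)))"

definition equiv_norms :: "((real \<Rightarrow> ennreal) \<Rightarrow> ennreal) \<Rightarrow> ((real \<Rightarrow> ennreal) \<Rightarrow> ennreal) \<Rightarrow> bool" where
  "equiv_norms \<rho> \<sigma> \<longleftrightarrow> (\<exists>c C::real. 0 < c \<and> 0 < C \<and>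
     (\<forall>f. meas01 f \<longrightarrow> ennreal c * \<sigma> f \<le> \<rho> f \<and> \<rho> f \<le> ennreal C * \<sigma> f))"

end

theory Submission
  imports Defs
begin
lemma meas01_antiI:
  fixes g :: "real \<Rightarrow> ennreal"
  assumes mono: "\<And>s t. s \<in> unitI \<Longrightarrow> t \<in> unitI \<Longrightarrow> s \<le> t \<Longrightarrow> g t \<le> g s"
  shows "meas01 g"
  unfolding meas01_def
proof (rule borel_measurableI_greater)
  fix y
  let ?S = "{x \<in> space (lebesgue_on unitI). y < g x}"
  have sp: "space (lebesgue_on unitI) = unitI" by simp
  have "is_interval ?S"
    unfolding is_interval_1 sp
  proof (intro ballI allI impI)
    fix a b x assume a: "a \<in> {x \<in> unitI. y < g x}" and b: "b \<in> {x \<in> unitI. y < g x}" and "a \<le> x \<and> x \<le> b"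
    then have "x \<in> unitI" by auto
    moreover have "g b \<le> g x" using mono[of x b] b \<open>x \<in> unitI\<close> \<open>a \<le> x \<and> x \<le> b\<close> by auto
    ultimately show "x \<in> {x \<in> unitI. y < g x}" using b by auto
  qed
  then have "convex ?S" by (simp add: is_interval_convex_1)
  moreover have "bounded ?S" by (rule bounded_subset[of unitI]) auto
  ultimately have "?S \<in> lmeasurable" by (rule measurable_convex)
  then have "?S \<in> sets lebesgue" by (simp add: fmeasurableD)
  then show "?S \<in> sets (lebesgue_on unitI)"
    by (subst sets_restrict_space_iff) auto
qed

lemma unitI_sets[simp]: "unitI \<in> sets lebesgue" by simp

lemma dist_set_sets:
  assumes "meas01 f"
  shows "{t\<in>unitI. y < f t} \<in> sets lebesgue"
proof -
  have "f -` {y<..} \<inter> space (lebesgue_on unitI) \<in> sets (lebesgue_on unitI)"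
    using assms unfolding meas01_def by (intro measurable_sets) auto
  moreover have "f -` {y<..} \<inter> space (lebesgue_on unitI) = {t\<in>unitI. y < f t}" by auto
  ultimately show ?thesis by (simp add: sets_restrict_space_iff)
qed

lemma dist_le1: "distrib_fun f y \<le> 1"
proof -
  have "distrib_fun f y \<le> emeasure lebesgue unitI"
    unfolding distrib_fun_def by (rule emeasure_mono) auto
  then show ?thesis by simp
qed

lemma dist_anti:
  assumes "meas01 f" "y \<le> y'"
  shows "distrib_fun f y' \<le> distrib_fun f y"
  unfolding distrib_fun_def using assms dist_set_sets[OF assms(1)]
  by (intro emeasure_mono) auto

lemma rearr_anti: "s \<le> s' \<Longrightarrow> rearr f s' \<le> rearr f s"
  unfolding rearr_def
  by (rule Inf_superset_mono) (auto intro: order_trans ennreal_leI)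

lemma dist_rearr_le:
  assumes f: "meas01 f"
  shows "distrib_fun f (rearr f s) \<le> ennreal s"
proof -
  let ?S = "{y. distrib_fun f y \<le> ennreal s}"
  have up: "y' \<in> ?S" if "y \<in> ?S" "y \<le> y'" for y y'
    using dist_anti[OF f that(2)] that(1) by auto
  define y0 where "y0 = rearr f s"
  have y0: "y0 = Inf ?S" unfolding y0_def rearr_def ..
  show ?thesis
  proof (cases "y0 = \<infinity>")
    case True
    have "distrib_fun f \<infinity> = 0" unfolding distrib_fun_def by simp
    then show ?thesis using True y0_def by simp
  next
    case False
    define e where "e n = ennreal (inverse (real (Suc n)))" for n :: nat
    define A where "A n = {t\<in>unitI. y0 + e n < f t}" for n :: nat
    have epos: "0 < e n" for n unfolding e_def by simp
    have inS: "y0 + e n \<in> ?S" for n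
    proof -
      have "Inf ?S < y0 + e n"
        using False epos[of n] y0 by simp
      then obtain z where "z \<in> ?S" "z < y0 + e n" by (auto simp: Inf_less_iff)
      then show ?thesis using up by auto
    qed
    have lim: "(\<lambda>n. y0 + e n) \<longlonglongrightarrow> y0"
    proof -
      have "e \<longlonglongrightarrow> ennreal 0"
        unfolding e_def by (intro tendsto_ennrealI LIMSEQ_inverse_real_of_nat)
      then have "(\<lambda>n. y0 + e n) \<longlonglongrightarrow> y0 + 0"
        by (intro tendsto_add tendsto_const) simp
      then show ?thesis by simp
    qed
    have Aeq: "{t\<in>unitI. y0 < f t} = (\<Union>n. A n)"
    proof
      show "{t\<in>unitI. y0 < f t} \<subseteq> (\<Union>n. A n)"
      proof
        fix t assume t: "t \<in> {t\<in>unitI. y0 < f t}"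
        then have "eventually (\<lambda>n. y0 + e n < f t) sequentially"
          using order_tendstoD(2)[OF lim] by auto
        then obtain n where "y0 + e n < f t" by (auto simp: eventually_sequentially)
        then show "t \<in> (\<Union>n. A n)" using t unfolding A_def by auto
      qed
      show "(\<Union>n. A n) \<subseteq> {t\<in>unitI. y0 < f t}"
        unfolding A_def using epos by (auto intro: le_less_trans[rotated] simp: add_increasing2)
    qed
    have incA: "incseq A"
    proof (rule incseq_SucI)
      fix n
      have "e (Suc n) \<le> e n" unfolding e_def
        by (intro ennreal_leI) (simp add: field_simps)
      then show "A n \<subseteq> A (Suc n)" unfolding A_def
        by (auto intro: le_less_trans[rotated] add_left_mono)
    qed
    have "distrib_fun f y0 = emeasure lebesgue (\<Union>n. A n)"
      unfolding distrib_fun_def Aeq ..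
    also have "\<dots> = (SUP n. emeasure lebesgue (A n))"
      using dist_set_sets[OF f] incA unfolding A_def
      by (intro SUP_emeasure_incseq[symmetric]) auto
    also have "\<dots> \<le> ennreal s"
      using inS unfolding A_def distrib_fun_def by (auto intro: SUP_least)
    finally show ?thesis unfolding y0_def .
  qed
qed

lemma rearr_le_iff:
  assumes f: "meas01 f"
  shows "rearr f s \<le> y \<longleftrightarrow> distrib_fun f y \<le> ennreal s"
proof
  assume "rearr f s \<le> y"
  then show "distrib_fun f y \<le> ennreal s"
    using dist_anti[OF f] dist_rearr_le[OF f, of s] order_trans by blast
next
  assume "distrib_fun f y \<le> ennreal s"
  then show "rearr f s \<le> y" unfolding rearr_def by (auto intro: Inf_lower)
qed

lemma less_rearr_iff:
  assumes f: "meas01 f"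
  shows "y < rearr f s \<longleftrightarrow> ennreal s < distrib_fun f y"
  using rearr_le_iff[OF f] by (meson not_le)

lemma meas01_rearr: "meas01 (rearr f)"
  by (rule meas01_antiI) (rule rearr_anti)

lemma dist_rearr:
  assumes f: "meas01 f"
  shows "distrib_fun (rearr f) y = distrib_fun f y"
proof -
  obtain r where r: "distrib_fun f y = ennreal r" "0 \<le> r" "r \<le> 1"
  proof -
    have "distrib_fun f y \<le> 1" by (rule dist_le1)
    then show ?thesis using that
      by (cases "distrib_fun f y") (auto simp: top_unique)
  qed
  have "{t\<in>unitI. y < rearr f t} = {0<..<r}"
    using r by (auto simp: less_rearr_iff[OF f] ennreal_less_iff)
  then have "distrib_fun (rearr f) y = emeasure lebesgue {0<..<r}"
    unfolding distrib_fun_def by simp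
  also have "\<dots> = ennreal r" using r by simp
  finally show ?thesis using r by simp
qed

lemma rearr_rearr:
  assumes f: "meas01 f"
  shows "rearr (rearr f) = rearr f"
proof (rule ext)
  fix t
  have "rearr (rearr f) t = Inf {y. distrib_fun (rearr f) y \<le> ennreal t}" by (rule rearr_def)
  also have "\<dots> = Inf {y. distrib_fun f y \<le> ennreal t}" by (simp only: dist_rearr[OF f])
  also have "\<dots> = rearr f t" by (rule rearr_def[symmetric])
  finally show "rearr (rearr f) t = rearr f t" .
qed

lemma dist_mono_AE:
  assumes f: "meas01 f" and g: "meas01 g" and le: "AE t in lebesgue_on unitI. g t \<le> f t"
  shows "distrib_fun g y \<le> distrib_fun f y"
proof -
  have "AE t in lebesgue. t \<in> unitI \<longrightarrow> g t \<le> f t"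
    using le by (subst (asm) AE_restrict_space_iff) auto
  then have "AE t in lebesgue. t \<in> {t\<in>unitI. y < g t} \<longrightarrow> t \<in> {t\<in>unitI. y < f t}"
    by eventually_elim (auto intro: less_le_trans)
  then show ?thesis unfolding distrib_fun_def
    by (rule emeasure_mono_AE) (rule dist_set_sets[OF f])
qed

lemma rearr_mono_AE:
  assumes f: "meas01 f" and g: "meas01 g" and le: "AE t in lebesgue_on unitI. g t \<le> f t"
  shows "rearr g s \<le> rearr f s"
  unfolding rearr_le_iff[OF g]
  using dist_mono_AE[OF f g le, of "rearr f s"] dist_rearr_le[OF f, of s] by simp

lemma meas01_cmult: "meas01 f \<Longrightarrow> meas01 (\<lambda>t. c * f t)"
  unfolding meas01_def by measurable

lemma meas01_add: "meas01 f \<Longrightarrow> meas01 g \<Longrightarrow> meas01 (\<lambda>t. f t + g t)"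
  unfolding meas01_def by measurable

lemma rearr_zero: "rearr (\<lambda>t. 0) s = 0"
proof -
  have "distrib_fun (\<lambda>t. 0) 0 = 0" unfolding distrib_fun_def by simp
  then have "rearr (\<lambda>t. 0) s \<le> 0" unfolding rearr_def by (intro Inf_lower) simp
  then show ?thesis by simp
qed

lemma rearr_cmult:
  assumes f: "meas01 f" and a: "0 \<le> a"
  shows "rearr (\<lambda>t. ennreal a * f t) s = ennreal a * rearr f s"
proof (cases "a = 0")
  case True
  then show ?thesis using rearr_zero by simp
next
  case False
  then have a0: "ennreal a \<noteq> 0" "ennreal a < top" using a by auto
  have af: "meas01 (\<lambda>t. ennreal a * f t)" by (rule meas01_cmult[OF f])
  have d: "distrib_fun (\<lambda>t. ennreal a * f t) z = distrib_fun f (z / ennreal a)" for z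
    unfolding distrib_fun_def using divide_less_ennreal[OF a0, of z]
    by (simp add: mult.commute)
  have iff: "rearr (\<lambda>t. ennreal a * f t) s \<le> z \<longleftrightarrow> ennreal a * rearr f s \<le> z" for z
  proof -
    have "rearr (\<lambda>t. ennreal a * f t) s \<le> z \<longleftrightarrow> rearr f s \<le> z / ennreal a"
      unfolding rearr_le_iff[OF af] rearr_le_iff[OF f] d ..
    also have "\<dots> \<longleftrightarrow> ennreal a * rearr f s \<le> z"
      using divide_less_ennreal[OF a0, of z "rearr f s"] by (auto simp: not_less[symmetric] mult.commute)
    finally show ?thesis .
  qed
  show ?thesis using iff[of "rearr (\<lambda>t. ennreal a * f t) s"] iff[of "ennreal a * rearr f s"]
    by (simp add: order.antisym)
qed

lemma rearr_add:
  assumes f: "meas01 f" and g: "meas01 g" and s: "0 \<le> s"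
  shows "rearr (\<lambda>t. f t + g t) s \<le> rearr f (s/2) + rearr g (s/2)"
proof -
  let ?a = "rearr f (s/2)" and ?b = "rearr g (s/2)"
  have fg: "meas01 (\<lambda>t. f t + g t)" by (rule meas01_add[OF f g])
  have sub: "{t\<in>unitI. ?a + ?b < f t + g t} \<subseteq> {t\<in>unitI. ?a < f t} \<union> {t\<in>unitI. ?b < g t}"
  proof (intro subsetI)
    fix t assume t: "t \<in> {t\<in>unitI. ?a + ?b < f t + g t}"
    show "t \<in> {t\<in>unitI. ?a < f t} \<union> {t\<in>unitI. ?b < g t}"
    proof (rule ccontr)
      assume "t \<notin> {t\<in>unitI. ?a < f t} \<union> {t\<in>unitI. ?b < g t}"
      then have "f t \<le> ?a" "g t \<le> ?b" using t by (auto simp: not_less)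
      then have "f t + g t \<le> ?a + ?b" by (rule add_mono)
      then show False using t by (simp add: not_less[symmetric])
    qed
  qed
  have "distrib_fun (\<lambda>t. f t + g t) (?a + ?b) \<le> emeasure lebesgue ({t\<in>unitI. ?a < f t} \<union> {t\<in>unitI. ?b < g t})"
    unfolding distrib_fun_def using sub dist_set_sets[OF f] dist_set_sets[OF g]
    by (intro emeasure_mono) auto
  also have "\<dots> \<le> distrib_fun f ?a + distrib_fun g ?b"
    unfolding distrib_fun_def using dist_set_sets[OF f] dist_set_sets[OF g]
    by (intro emeasure_subadditive) auto
  also have "\<dots> \<le> ennreal (s/2) + ennreal (s/2)"
    by (intro add_mono dist_rearr_le f g)
  also have "\<dots> = ennreal s" using s by (simp flip: ennreal_plus)
  finally show ?thesis unfolding rearr_le_iff[OF fg] .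
qed

lemma rearr_SUP:
  assumes F: "\<And>n. meas01 (F n)" and f: "meas01 f"
    and conv: "AE t in lebesgue_on unitI. incseq (\<lambda>n. F n t) \<and> (\<lambda>n. F n t) \<longlonglongrightarrow> f t"
  shows "incseq (\<lambda>n. rearr (F n) s)" and "rearr f s = (SUP n. rearr (F n) s)"
proof -
  have conv': "AE t in lebesgue. t \<in> unitI \<longrightarrow> incseq (\<lambda>n. F n t) \<and> (\<lambda>n. F n t) \<longlonglongrightarrow> f t"
    using conv by (subst (asm) AE_restrict_space_iff) auto
  have fsup: "AE t in lebesgue. t \<in> unitI \<longrightarrow> incseq (\<lambda>n. F n t) \<and> f t = (SUP n. F n t)"
    using conv' by eventually_elim (auto intro: LIMSEQ_unique LIMSEQ_SUP)
  have mono: "AE t in lebesgue_on unitI. F n t \<le> F m t" if "n \<le> m" for n m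
    using conv by eventually_elim (use that in \<open>auto simp: incseq_def\<close>)
  have upf: "AE t in lebesgue_on unitI. F n t \<le> f t" for n
    using conv by eventually_elim (auto intro: LIMSEQ_le_const incseq_le)
  show inc: "incseq (\<lambda>n. rearr (F n) s)"
    unfolding incseq_def using rearr_mono_AE[OF F F mono] by auto
  let ?L = "SUP n. rearr (F n) s"
  have "?L \<le> rearr f s" using rearr_mono_AE[OF f F upf] by (auto intro: SUP_least)
  moreover have "rearr f s \<le> ?L"
    unfolding rearr_le_iff[OF f]
  proof -
    define A where "A n = {t\<in>unitI. ?L < F n t}" for n
    define B where "B n = (\<Union>m\<le>n. A m)" for n
    have Asets: "A n \<in> sets lebesgue" for n unfolding A_def by (rule dist_set_sets[OF F])
    have Bsets: "B n \<in> sets lebesgue" for n unfolding B_def using Asets by auto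
    have incB: "incseq B" unfolding B_def incseq_def by (auto intro: order_trans)
    have "AE t in lebesgue. t \<in> {t\<in>unitI. ?L < f t} \<longrightarrow> t \<in> (\<Union>n. B n)"
      using fsup
    proof eventually_elim
      case (elim t)
      show ?case
      proof
        assume t: "t \<in> {t\<in>unitI. ?L < f t}"
        then have "?L < (SUP n. F n t)" using elim by auto
        then obtain n where "?L < F n t" by (auto simp: less_SUP_iff)
        then show "t \<in> (\<Union>n. B n)" using t unfolding B_def A_def by auto
      qed
    qed
    then have "distrib_fun f ?L \<le> emeasure lebesgue (\<Union>n. B n)"
      unfolding distrib_fun_def by (rule emeasure_mono_AE) (use Bsets in auto)
    also have "\<dots> = (SUP n. emeasure lebesgue (B n))"
      using Bsets incB by (intro SUP_emeasure_incseq[symmetric]) auto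
    also have "\<dots> \<le> ennreal s"
    proof (rule SUP_least)
      fix n
      have "AE t in lebesgue. t \<in> B n \<longrightarrow> t \<in> A n"
      proof -
        have "AE t in lebesgue_on unitI. \<forall>m\<in>{..n}. F m t \<le> F n t"
          by (subst AE_finite_all) (auto intro: mono)
        then have "AE t in lebesgue. t \<in> unitI \<longrightarrow> (\<forall>m\<in>{..n}. F m t \<le> F n t)"
          by (subst (asm) AE_restrict_space_iff) auto
        then show ?thesis
          by eventually_elim (auto simp: A_def B_def intro: less_le_trans)
      qed
      then have "emeasure lebesgue (B n) \<le> emeasure lebesgue (A n)"
        by (rule emeasure_mono_AE) (rule Asets)
      also have "\<dots> = distrib_fun (F n) ?L" unfolding A_def distrib_fun_def ..
      also have "\<dots> \<le> distrib_fun (F n) (rearr (F n) s)"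
        by (rule dist_anti[OF F]) (rule SUP_upper, simp)
      also have "\<dots> \<le> ennreal s" by (rule dist_rearr_le[OF F])
      finally show "emeasure lebesgue (B n) \<le> ennreal s" .
    qed
    finally show "distrib_fun f ?L \<le> ennreal s" .
  qed
  ultimately show "rearr f s = ?L" by (rule order.antisym[rotated])
qed

lemma div_le_iff_ennreal:
  assumes "0 < c"
  shows "x / ennreal c \<le> y \<longleftrightarrow> x \<le> y * ennreal c"
proof
  have c: "ennreal c \<noteq> 0" "ennreal c \<noteq> top" using assms by auto
  assume "x / ennreal c \<le> y"
  then have "x / ennreal c * ennreal c \<le> y * ennreal c" by (rule mult_right_mono) simp
  then show "x \<le> y * ennreal c" using c by (simp add: ennreal_divide_times)
next
  have c: "ennreal c \<noteq> 0" "ennreal c \<noteq> top" using assms by auto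
  assume "x \<le> y * ennreal c"
  then have "x / ennreal c \<le> y * ennreal c / ennreal c" by (rule divide_right_mono_ennreal)
  then show "x / ennreal c \<le> y" using c by (simp add: mult_divide_eq_ennreal)
qed

lemma le_div_iff_ennreal:
  assumes "0 < c"
  shows "y \<le> x / ennreal c \<longleftrightarrow> y * ennreal c \<le> x"
  using divide_less_ennreal[of "ennreal c" x y] assms by (auto simp: not_less[symmetric])

lemma mult_div_cancel_ennreal:
  assumes "0 < c"
  shows "ennreal c * (x / ennreal c) = x"
  using assms by (simp add: ennreal_times_divide mult.commute mult_divide_eq_ennreal)

definition SS :: "(real \<Rightarrow> real) \<Rightarrow> (real \<Rightarrow> ennreal) \<Rightarrow> real \<Rightarrow> ennreal" where
  "SS I h t = (SUP s\<in>{0<..t}. ennreal (I s) * h s) / ennreal (I t)"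

lemma S_op_SS: "S_op I f = SS I (rearr f)"
  by (simp add: S_op_def SS_def fun_eq_iff)

locale Ifun =
  fixes I :: "real \<Rightarrow> real"
  assumes Ipos: "\<And>t. t \<in> unitI \<Longrightarrow> 0 < I t"
    and Imono: "\<And>s t. s \<in> unitI \<Longrightarrow> t \<in> unitI \<Longrightarrow> s \<le> t \<Longrightarrow> I s \<le> I t"
begin

lemma SS_anti:
  assumes h: "\<And>s t. s \<in> unitI \<Longrightarrow> t \<in> unitI \<Longrightarrow> s \<le> t \<Longrightarrow> h t \<le> h s"
    and st: "s \<in> unitI" "t \<in> unitI" "s \<le> t"
  shows "SS I h t \<le> SS I h s"
proof -
  define Ms where "Ms = (SUP u\<in>{0<..s}. ennreal (I u) * h u)"
  have Is: "0 < I s" and It: "0 < I t" using Ipos st by auto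
  have hs: "h s * ennreal (I s) \<le> Ms"
    unfolding Ms_def using st by (subst mult.commute) (intro SUP_upper, auto)
  have "(SUP u\<in>{0<..t}. ennreal (I u) * h u) \<le> SS I h s * ennreal (I t)"
  proof (rule SUP_least)
    fix u assume u: "u \<in> {0<..t}"
    show "ennreal (I u) * h u \<le> SS I h s * ennreal (I t)"
    proof (cases "u \<le> s")
      case True
      have "ennreal (I u) * h u \<le> Ms" unfolding Ms_def using True u by (intro SUP_upper) auto
      also have "\<dots> = SS I h s * ennreal (I s)"
        unfolding SS_def Ms_def[symmetric] using Is by (simp add: ennreal_divide_times mult_divide_eq_ennreal)
      also have "\<dots> \<le> SS I h s * ennreal (I t)"
        using Imono[OF st] by (intro mult_left_mono ennreal_leI) auto
      finally show ?thesis .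
    next
      case False
      then have uI: "u \<in> unitI" using u st by auto
      have "ennreal (I u) * h u \<le> ennreal (I t) * h s"
        using Imono[OF uI st(2)] h[OF st(1) uI] u False
        by (intro mult_mono ennreal_leI) auto
      also have "\<dots> \<le> ennreal (I t) * SS I h s"
        unfolding SS_def Ms_def[symmetric] using Is hs
        by (intro mult_left_mono) (auto simp: le_div_iff_ennreal)
      finally show ?thesis by (simp add: mult.commute)
    qed
  qed
  then show ?thesis unfolding SS_def[of I h t] using It by (simp add: div_le_iff_ennreal)
qed

lemma meas01_SS:
  assumes h: "\<And>s t. s \<in> unitI \<Longrightarrow> t \<in> unitI \<Longrightarrow> s \<le> t \<Longrightarrow> h t \<le> h s"
  shows "meas01 (SS I h)"
  by (rule meas01_antiI) (rule SS_anti[OF h])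

lemma meas01_S_op: "meas01 (S_op I f)"
  unfolding S_op_SS by (rule meas01_SS) (rule rearr_anti)

lemma S_op_anti: "s \<in> unitI \<Longrightarrow> t \<in> unitI \<Longrightarrow> s \<le> t \<Longrightarrow> S_op I f t \<le> S_op I f s"
  unfolding S_op_SS by (rule SS_anti) (auto intro: rearr_anti)

lemma SS_mono:
  assumes "\<And>s. s \<in> {0<..t} \<Longrightarrow> h s \<le> h' s"
  shows "SS I h t \<le> SS I h' t"
  unfolding SS_def using assms
proof (intro divide_right_mono_ennreal SUP_mono)
  fix s assume "s \<in> {0<..t}"
  then show "\<exists>m\<in>{0<..t}. ennreal (I s) * h s \<le> ennreal (I m) * h' m"
    using assms by (intro bexI[of _ s] mult_left_mono) auto
qed

lemma SS_cmult: "SS I (\<lambda>s. c * h s) t = c * SS I h t"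
  unfolding SS_def
  by (simp add: SUP_mult_left_ennreal[symmetric] ennreal_times_divide mult.left_commute)

lemma SS_SUP: "SS I (\<lambda>s. SUP n. H n s) t = (SUP n. SS I (H n) t)"
  unfolding SS_def
  by (simp add: SUP_mult_left_ennreal SUP_divide_ennreal) (subst SUP_commute, rule refl)

lemma SS_lower:
  assumes "t \<in> unitI"
  shows "h t \<le> SS I h t"
  unfolding SS_def using assms Ipos[OF assms]
  by (subst le_div_iff_ennreal) (auto simp: mult.commute intro!: SUP_upper)

lemma SS_upper_const:
  assumes t: "t \<in> unitI" and h: "\<And>s. s \<in> {0<..t} \<Longrightarrow> h s \<le> c"
  shows "SS I h t \<le> c"
  unfolding SS_def using Ipos[OF t]
proof (subst div_le_iff_ennreal)
  show "(SUP s\<in>{0<..t}. ennreal (I s) * h s) \<le> c * ennreal (I t)"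
  proof (rule SUP_least)
    fix s assume s: "s \<in> {0<..t}"
    then have "I s \<le> I t" using t by (intro Imono) auto
    then show "ennreal (I s) * h s \<le> c * ennreal (I t)"
      using h[OF s] by (subst mult.commute) (intro mult_mono ennreal_leI, auto)
  qed
qed auto

lemma SS_add: "SS I (\<lambda>s. h s + g s) t \<le> SS I h t + SS I g t"
  unfolding SS_def add_divide_distrib_ennreal[symmetric]
  by (intro divide_right_mono_ennreal SUP_least)
     (auto simp: distrib_left intro!: add_mono SUP_upper)

end

locale Sig = Ifun +
  fixes X :: "(real \<Rightarrow> ennreal) \<Rightarrow> ennreal"
  assumes X_ri: "ri_norm X"
begin

lemma X_hom: "meas01 f \<Longrightarrow> 0 \<le> a \<Longrightarrow> X (\<lambda>t. ennreal a * f t) = ennreal a * X f"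
  using X_ri unfolding ri_norm_def ri_common_def by blast
lemma X_zero: "meas01 f \<Longrightarrow> X f = 0 \<longleftrightarrow> (AE t in lebesgue_on unitI. f t = 0)"
  using X_ri unfolding ri_norm_def ri_common_def by blast
lemma X_mono: "meas01 f \<Longrightarrow> meas01 g \<Longrightarrow> (AE t in lebesgue_on unitI. g t \<le> f t) \<Longrightarrow> X g \<le> X f"
  using X_ri unfolding ri_norm_def ri_common_def by blast
lemma X_fatou: "(\<And>n. meas01 (F n)) \<Longrightarrow> meas01 f \<Longrightarrow>
        (AE t in lebesgue_on unitI. incseq (\<lambda>n. F n t) \<and> (\<lambda>n. F n t) \<longlonglongrightarrow> f t)
        \<Longrightarrow> incseq (\<lambda>n. X (F n)) \<and> (\<lambda>n. X (F n)) \<longlonglongrightarrow> X f"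
  using X_ri unfolding ri_norm_def ri_common_def by blast
lemma X_ind: "X (indicator unitI) < \<infinity>"
  using X_ri unfolding ri_norm_def ri_common_def by blast
lemma X_rearr: "meas01 f \<Longrightarrow> X f = X (rearr f)"
  using X_ri unfolding ri_norm_def ri_common_def by blast
lemma X_tri: "meas01 f \<Longrightarrow> meas01 g \<Longrightarrow> X (\<lambda>t. f t + g t) \<le> X f + X g"
  using X_ri unfolding ri_norm_def by blast
lemma X_int: "\<exists>C::real. \<forall>f. meas01 f \<longrightarrow> (\<integral>\<^sup>+ t\<in>unitI. f t \<partial>lebesgue) \<le> ennreal C * X f"
  using X_ri unfolding ri_norm_def by blast

lemma X_mono_on: "meas01 f \<Longrightarrow> meas01 g \<Longrightarrow> (\<And>t. t \<in> unitI \<Longrightarrow> g t \<le> f t) \<Longrightarrow> X g \<le> X f"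
  by (rule X_mono) (auto intro!: AE_I2)

lemma S_op_cmult:
  assumes f: "meas01 f" and a: "0 \<le> a"
  shows "S_op I (\<lambda>t. ennreal a * f t) = (\<lambda>t. ennreal a * S_op I f t)"
  unfolding S_op_SS rearr_cmult[OF f a, abs_def] by (simp add: SS_cmult fun_eq_iff)

lemma sig_hom:
  assumes f: "meas01 f" and a: "0 \<le> a"
  shows "X (S_op I (\<lambda>t. ennreal a * f t)) = ennreal a * X (S_op I f)"
  unfolding S_op_cmult[OF f a] by (rule X_hom[OF meas01_S_op a])

lemma dist_zero_iff:
  assumes f: "meas01 f"
  shows "distrib_fun f 0 = 0 \<longleftrightarrow> (AE t in lebesgue_on unitI. f t = 0)"
proof
  assume "distrib_fun f 0 = 0"
  then have "{t\<in>unitI. 0 < f t} \<in> null_sets lebesgue"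
    unfolding distrib_fun_def using dist_set_sets[OF f] by (auto simp: null_sets_def)
  then have "AE t in lebesgue. t \<notin> {t\<in>unitI. 0 < f t}" by (rule AE_not_in)
  then have "AE t in lebesgue. t \<in> unitI \<longrightarrow> f t = 0" by eventually_elim auto
  then show "AE t in lebesgue_on unitI. f t = 0" by (subst AE_restrict_space_iff) auto
next
  assume "AE t in lebesgue_on unitI. f t = 0"
  then have "AE t in lebesgue. t \<in> unitI \<longrightarrow> f t = 0" by (subst (asm) AE_restrict_space_iff) auto
  then have "AE t in lebesgue. t \<notin> {t\<in>unitI. 0 < f t}" by eventually_elim auto
  then have "{t\<in>unitI. 0 < f t} \<in> null_sets lebesgue"
    using AE_iff_null_sets[OF dist_set_sets[OF f]] by blast
  then show "distrib_fun f 0 = 0" unfolding distrib_fun_def by (rule null_setsD1)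
qed

lemma sig_zero:
  assumes f: "meas01 f"
  shows "X (S_op I f) = 0 \<longleftrightarrow> (AE t in lebesgue_on unitI. f t = 0)"
proof
  assume "X (S_op I f) = 0"
  then have "AE t in lebesgue_on unitI. S_op I f t = 0" using X_zero[OF meas01_S_op] by simp
  then have "AE t in lebesgue_on unitI. rearr f t = 0"
    using AE_space
  proof eventually_elim
    case (elim t)
    then show ?case using SS_lower[of t "rearr f"] unfolding S_op_SS by auto
  qed
  then have "distrib_fun (rearr f) 0 = 0" using dist_zero_iff[OF meas01_rearr] by simp
  then show "AE t in lebesgue_on unitI. f t = 0" using dist_zero_iff[OF f] dist_rearr[OF f] by simp
next
  assume "AE t in lebesgue_on unitI. f t = 0"
  then have d: "distrib_fun f 0 = 0" using dist_zero_iff[OF f] by simp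
  have r: "rearr f s = 0" if "0 < s" for s
    using rearr_le_iff[OF f, of s 0] d by simp
  have z: "(SUP x\<in>A. (0::ennreal)) = 0" for A :: "real set"
    by (metis SUP_bot bot_ennreal)
  have "S_op I f = (\<lambda>t. 0)"
    unfolding S_op_def by (auto simp: fun_eq_iff r z)
  then show "X (S_op I f) = 0"
    using X_zero[of "\<lambda>t. 0"] by (simp add: meas01_def)
qed

end

context Sig
begin

lemma S_op_mono:
  assumes f: "meas01 f" and g: "meas01 g" and le: "AE t in lebesgue_on unitI. g t \<le> f t"
  shows "S_op I g t \<le> S_op I f t"
  unfolding S_op_SS by (rule SS_mono) (rule rearr_mono_AE[OF f g le])

lemma sig_mono:
  assumes f: "meas01 f" and g: "meas01 g" and le: "AE t in lebesgue_on unitI. g t \<le> f t"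
  shows "X (S_op I g) \<le> X (S_op I f)"
  by (rule X_mono_on[OF meas01_S_op meas01_S_op]) (rule S_op_mono[OF f g le])

lemma S_op_SUP:
  assumes F: "\<And>n. meas01 (F n)" and f: "meas01 f"
    and conv: "AE t in lebesgue_on unitI. incseq (\<lambda>n. F n t) \<and> (\<lambda>n. F n t) \<longlonglongrightarrow> f t"
  shows "incseq (\<lambda>n. S_op I (F n) t)" and "S_op I f t = (SUP n. S_op I (F n) t)"
proof -
  show "incseq (\<lambda>n. S_op I (F n) t)"
    unfolding incseq_def S_op_SS
    using rearr_SUP(1)[OF F f conv] by (auto intro!: SS_mono simp: incseq_def)
  have "rearr f = (\<lambda>s. SUP n. rearr (F n) s)"
    using rearr_SUP(2)[OF F f conv] by auto
  then show "S_op I f t = (SUP n. S_op I (F n) t)"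
    unfolding S_op_SS by (simp add: SS_SUP)
qed

lemma sig_fatou:
  assumes F: "\<And>n. meas01 (F n)" and f: "meas01 f"
    and conv: "AE t in lebesgue_on unitI. incseq (\<lambda>n. F n t) \<and> (\<lambda>n. F n t) \<longlonglongrightarrow> f t"
  shows "incseq (\<lambda>n. X (S_op I (F n))) \<and> (\<lambda>n. X (S_op I (F n))) \<longlonglongrightarrow> X (S_op I f)"
proof (rule X_fatou[OF meas01_S_op meas01_S_op], rule AE_I2, rule conjI)
  fix t
  show "incseq (\<lambda>n. S_op I (F n) t)" by (rule S_op_SUP(1)[OF F f conv])
  then show "(\<lambda>n. S_op I (F n) t) \<longlonglongrightarrow> S_op I f t"
    unfolding S_op_SUP(2)[OF F f conv] by (rule LIMSEQ_SUP)
qed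

lemma meas01_ind: "meas01 (indicator unitI :: real \<Rightarrow> ennreal)"
  unfolding meas01_def by (intro borel_measurable_indicator) auto

lemma sig_ind: "X (S_op I (indicator unitI)) < \<infinity>"
proof -
  have r: "rearr (indicator unitI) s \<le> 1" if "0 < s" for s
  proof -
    have e: "{t\<in>unitI. (1::ennreal) < indicator unitI t} = {}" by (auto simp: indicator_def)
    have "distrib_fun (indicator unitI :: real \<Rightarrow> ennreal) 1 = 0"
      unfolding distrib_fun_def e by simp
    then show ?thesis using rearr_le_iff[OF meas01_ind] by simp
  qed
  have "X (S_op I (indicator unitI)) \<le> X (indicator unitI)"
  proof (rule X_mono_on[OF meas01_ind meas01_S_op])
    fix t :: real assume t: "t \<in> unitI"
    have "S_op I (indicator unitI) t \<le> 1"
      unfolding S_op_SS by (rule SS_upper_const[OF t]) (use r in auto)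
    then show "S_op I (indicator unitI) t \<le> indicator unitI t" using t by simp
  qed
  then show ?thesis using X_ind by (rule le_less_trans)
qed

lemma sig_rearr: "meas01 f \<Longrightarrow> X (S_op I f) = X (S_op I (rearr f))"
  by (simp add: S_op_SS rearr_rearr)

lemma S_op_quasi:
  assumes f: "meas01 f" and g: "meas01 g" and C: "1 \<le> C"
    and dbl: "\<And>t. t \<in> {0<..<1/2} \<Longrightarrow> I (2*t) \<le> C * I t"
    and t: "t \<in> unitI"
  shows "S_op I (\<lambda>t. f t + g t) t \<le> ennreal C * (S_op I f t + S_op I g t)"
proof -
  let ?Mf = "SUP s\<in>{0<..t}. ennreal (I s) * rearr f s"
  let ?Mg = "SUP s\<in>{0<..t}. ennreal (I s) * rearr g s"
  have "(SUP s\<in>{0<..t}. ennreal (I s) * rearr (\<lambda>t. f t + g t) s) \<le> ennreal C * (?Mf + ?Mg)"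
  proof (rule SUP_least)
    fix s assume s: "s \<in> {0<..t}"
    have h: "s/2 \<in> {0<..t}" using s by auto
    have "I s \<le> C * I (s/2)" using dbl[of "s/2"] s t by auto
    then have Is: "ennreal (I s) \<le> ennreal C * ennreal (I (s/2))"
      using C Ipos[of "s/2"] s t by (subst ennreal_mult[symmetric]) (auto intro: ennreal_leI)
    have "ennreal (I s) * rearr (\<lambda>t. f t + g t) s \<le> ennreal (I s) * (rearr f (s/2) + rearr g (s/2))"
      using s by (intro mult_left_mono rearr_add f g) auto
    also have "\<dots> \<le> (ennreal C * ennreal (I (s/2))) * (rearr f (s/2) + rearr g (s/2))"
      by (intro mult_right_mono Is) auto
    also have "\<dots> = ennreal C * (ennreal (I (s/2)) * rearr f (s/2) + ennreal (I (s/2)) * rearr g (s/2))"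
      by (simp add: algebra_simps)
    also have "\<dots> \<le> ennreal C * (?Mf + ?Mg)"
      using h by (intro mult_left_mono add_mono SUP_upper) auto
    finally show "ennreal (I s) * rearr (\<lambda>t. f t + g t) s \<le> ennreal C * (?Mf + ?Mg)" .
  qed
  then have "S_op I (\<lambda>t. f t + g t) t \<le> ennreal C * (?Mf + ?Mg) / ennreal (I t)"
    unfolding S_op_def by (rule divide_right_mono_ennreal)
  also have "\<dots> = ennreal C * (S_op I f t + S_op I g t)"
    unfolding S_op_def by (simp add: ennreal_times_divide[symmetric] add_divide_distrib_ennreal)
  finally show ?thesis .
qed

lemma sig_quasi:
  assumes f: "meas01 f" and g: "meas01 g" and C: "1 \<le> C"
    and dbl: "\<And>t. t \<in> {0<..<1/2} \<Longrightarrow> I (2*t) \<le> C * I t"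
  shows "X (S_op I (\<lambda>t. f t + g t)) \<le> ennreal C * (X (S_op I f) + X (S_op I g))"
proof -
  have m: "meas01 (\<lambda>t. S_op I f t + S_op I g t)" by (intro meas01_add meas01_S_op)
  have "X (S_op I (\<lambda>t. f t + g t)) \<le> X (\<lambda>t. ennreal C * (S_op I f t + S_op I g t))"
    by (rule X_mono_on[OF meas01_cmult[OF m] meas01_S_op]) (rule S_op_quasi[OF f g C dbl])
  also have "\<dots> = ennreal C * X (\<lambda>t. S_op I f t + S_op I g t)"
    using C by (intro X_hom m) auto
  also have "\<dots> \<le> ennreal C * (X (S_op I f) + X (S_op I g))"
    by (intro mult_left_mono X_tri meas01_S_op) auto
  finally show ?thesis .
qed

lemma rearr_le_anti:
  assumes h: "\<And>s t. s \<in> unitI \<Longrightarrow> t \<in> unitI \<Longrightarrow> s \<le> t \<Longrightarrow> h t \<le> h s"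
    and hm: "meas01 h" and s: "s \<in> unitI"
  shows "rearr h s \<le> h s"
proof -
  have "{u\<in>unitI. h s < h u} \<subseteq> {0<..<s}"
  proof
    fix u assume u: "u \<in> {u\<in>unitI. h s < h u}"
    have "u < s"
    proof (rule ccontr)
      assume "\<not> u < s"
      then have "h u \<le> h s" using h[of s u] u s by auto
      then show False using u by auto
    qed
    then show "u \<in> {0<..<s}" using u by auto
  qed
  then have "distrib_fun h (h s) \<le> emeasure lebesgue {0<..<s}"
    unfolding distrib_fun_def by (intro emeasure_mono) auto
  also have "\<dots> = ennreal s" using s by simp
  finally show ?thesis unfolding rearr_le_iff[OF hm] .
qed

lemma S_op_S_op:
  assumes t: "t \<in> unitI"
  shows "S_op I (S_op I f) t \<le> S_op I f t"
proof -
  let ?g = "S_op I f"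
  have "S_op I ?g t \<le> SS I ?g t"
    unfolding S_op_SS[of I ?g]
    by (rule SS_mono) (use t in \<open>auto intro!: rearr_le_anti S_op_anti meas01_S_op\<close>)
  also have "\<dots> \<le> S_op I f t"
    unfolding SS_def[of I ?g]
  proof (subst div_le_iff_ennreal)
    show "0 < I t" using Ipos[OF t] .
    show "(SUP s\<in>{0<..t}. ennreal (I s) * S_op I f s) \<le> S_op I f t * ennreal (I t)"
    proof (rule SUP_least)
      fix s assume s: "s \<in> {0<..t}"
      then have sI: "s \<in> unitI" using t by auto
      have "ennreal (I s) * S_op I f s = (SUP u\<in>{0<..s}. ennreal (I u) * rearr f u)"
        unfolding S_op_def using Ipos[OF sI] by (rule mult_div_cancel_ennreal)
      also have "\<dots> \<le> (SUP u\<in>{0<..t}. ennreal (I u) * rearr f u)"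
        using s by (intro SUP_subset_mono) auto
      also have "\<dots> = S_op I f t * ennreal (I t)"
        unfolding S_op_def using Ipos[OF t] by (simp add: mult.commute mult_div_cancel_ennreal)
      finally show "ennreal (I s) * S_op I f s \<le> S_op I f t * ennreal (I t)" .
    qed
  qed
  finally show ?thesis .
qed

end

lemma set_nn_on:
  assumes "A \<subseteq> unitI"
  shows "(\<integral>\<^sup>+u\<in>A. g u \<partial>lebesgue) = (\<integral>\<^sup>+u. g u * indicator A u \<partial>lebesgue_on unitI)"
proof -
  have "(\<integral>\<^sup>+u. g u * indicator A u \<partial>lebesgue_on unitI) = (\<integral>\<^sup>+u. g u * indicator A u * indicator unitI u \<partial>lebesgue)"
    by (rule nn_integral_restrict_space) simp
  also have "\<dots> = (\<integral>\<^sup>+u\<in>A. g u \<partial>lebesgue)"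
    using assms by (intro nn_integral_cong) (auto simp: indicator_def)
  finally show ?thesis ..
qed

lemma distr_rearr:
  assumes h: "meas01 h"
  shows "distr (lebesgue_on unitI) borel (rearr h) = distr (lebesgue_on unitI) borel h"
proof -
  let ?E = "insert UNIV (range greaterThan) :: ennreal set set"
  have sE: "sets (borel :: ennreal measure) = sigma_sets UNIV ?E"
  proof -
    have "sets (borel :: ennreal measure) = sigma_sets UNIV (range greaterThan)"
      by (subst borel_Ioi) (simp add: sets_measure_of)
    also have "\<dots> = sigma_sets UNIV ?E"
      by (rule sigma_sets_eqI) (auto intro: sigma_sets_top)
    finally show ?thesis .
  qed
  have em: "emeasure (distr (lebesgue_on unitI) borel g) {y<..} = distrib_fun g y" if g: "meas01 g" for g y
  proof -
    have "emeasure (distr (lebesgue_on unitI) borel g) {y<..} = emeasure (lebesgue_on unitI) (g -` {y<..} \<inter> unitI)"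
      using g unfolding meas01_def by (subst emeasure_distr) auto
    also have "\<dots> = emeasure lebesgue (g -` {y<..} \<inter> unitI)"
      by (rule emeasure_restrict_space) auto
    also have "g -` {y<..} \<inter> unitI = {t\<in>unitI. y < g t}" by auto
    finally show ?thesis unfolding distrib_fun_def .
  qed
  have emU: "emeasure (distr (lebesgue_on unitI) borel g) UNIV = 1" if g: "meas01 g" for g
  proof -
    have "emeasure (distr (lebesgue_on unitI) borel g) UNIV = emeasure (lebesgue_on unitI) (g -` UNIV \<inter> unitI)"
      using g unfolding meas01_def by (subst emeasure_distr) auto
    also have "\<dots> = emeasure lebesgue unitI"
      by (subst emeasure_restrict_space) auto
    finally show ?thesis by simp
  qed
  show ?thesis
  proof (rule measure_eqI_generator_eq[where \<Omega>=UNIV and E="?E" and A="\<lambda>i. UNIV"])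
    have k: "{x<..} \<inter> {y<..} = {max x y<..}" for x y :: ennreal by auto
    show "Int_stable ?E" by (auto simp: Int_stable_def k)
    show "?E \<subseteq> Pow UNIV" by auto
    fix X assume "X \<in> ?E"
    then show "emeasure (distr (lebesgue_on unitI) borel (rearr h)) X = emeasure (distr (lebesgue_on unitI) borel h) X"
      using em[OF meas01_rearr] em[OF h] emU[OF meas01_rearr] emU[OF h] dist_rearr[OF h] by auto
  next
    show "sets (distr (lebesgue_on unitI) borel (rearr h)) = sigma_sets UNIV ?E" using sE by simp
    show "sets (distr (lebesgue_on unitI) borel h) = sigma_sets UNIV ?E" using sE by simp
    show "range (\<lambda>i. UNIV) \<subseteq> ?E" by auto
    show "(\<Union>i::nat. UNIV) = (UNIV :: ennreal set)" by auto
    fix i :: nat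
    show "emeasure (distr (lebesgue_on unitI) borel (rearr h)) UNIV \<noteq> \<infinity>"
      using emU[OF meas01_rearr] by simp
  qed
qed

lemma int_rearr_minus:
  assumes h: "meas01 h"
  shows "(\<integral>\<^sup>+ t\<in>unitI. (h t - y) \<partial>lebesgue) = (\<integral>\<^sup>+ t\<in>unitI. (rearr h t - y) \<partial>lebesgue)"
proof -
  have eq: "(\<integral>\<^sup>+ t\<in>unitI. (g t - y) \<partial>lebesgue) = (\<integral>\<^sup>+ x. (x - y) \<partial>distr (lebesgue_on unitI) borel g)"
    if g: "meas01 g" for g
  proof -
    have "(\<integral>\<^sup>+ t\<in>unitI. (g t - y) \<partial>lebesgue) = (\<integral>\<^sup>+ t. (g t - y) \<partial>lebesgue_on unitI)"
      by (subst nn_integral_restrict_space) auto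
    also have "\<dots> = (\<integral>\<^sup>+ x. (x - y) \<partial>distr (lebesgue_on unitI) borel g)"
      using g unfolding meas01_def by (subst nn_integral_distr) auto
    finally show ?thesis .
  qed
  show ?thesis unfolding eq[OF h] eq[OF meas01_rearr] distr_rearr[OF h] ..
qed

lemma ennreal_diff_add_le: "((x::ennreal) + z) - (a + b) \<le> (x - a) + (z - b)"
  by (smt (verit, best) add_diff_eq_iff_ennreal add_diff_le_ennreal add_mono
    diff_add_assoc2_ennreal diff_add_eq_diff_diff_swap_ennreal
    diff_eq_0_iff_ennreal ennreal_diff_self
    ennreal_minus_cancel_iff ennreal_minus_eq_top ennreal_minus_le_iff
    le_zero_eq nle_le)

lemma set_nn_const_add:
  assumes A: "A \<subseteq> unitI" "A \<in> sets lebesgue" and g: "meas01 g"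
  shows "(\<integral>\<^sup>+u\<in>A. (c + g u) \<partial>lebesgue) = c * emeasure lebesgue A + (\<integral>\<^sup>+u\<in>A. g u \<partial>lebesgue)"
proof -
  have As: "A \<in> sets (lebesgue_on unitI)" using A by (simp add: sets_restrict_space_iff)
  have "(\<integral>\<^sup>+u\<in>A. (c + g u) \<partial>lebesgue) = (\<integral>\<^sup>+u. (c * indicator A u + g u * indicator A u) \<partial>lebesgue_on unitI)"
    unfolding set_nn_on[OF A(1)] by (intro nn_integral_cong) (simp add: distrib_right)
  also have "\<dots> = (\<integral>\<^sup>+u. c * indicator A u \<partial>lebesgue_on unitI) + (\<integral>\<^sup>+u. g u * indicator A u \<partial>lebesgue_on unitI)"
    using g As unfolding meas01_def by (intro nn_integral_add) auto
  also have "(\<integral>\<^sup>+u. c * indicator A u \<partial>lebesgue_on unitI) = c * emeasure (lebesgue_on unitI) A"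
    using As by (rule nn_integral_cmult_indicator)
  also have "emeasure (lebesgue_on unitI) A = emeasure lebesgue A"
    using A by (intro emeasure_restrict_space) auto
  finally show ?thesis unfolding set_nn_on[OF A(1)] .
qed

definition P :: "(real \<Rightarrow> ennreal) \<Rightarrow> real \<Rightarrow> ennreal" where
  "P h s = (\<integral>\<^sup>+ u\<in>{0<..<s}. rearr h u \<partial>lebesgue)"

lemma meas01_minus: "meas01 g \<Longrightarrow> meas01 (\<lambda>t. g t - y)"
  unfolding meas01_def by (intro borel_measurable_minus_ennreal) auto

lemma K1:
  assumes h: "meas01 h" and s: "s \<in> unitI"
  shows "P h s \<le> ennreal s * y + (\<integral>\<^sup>+ t\<in>unitI. (h t - y) \<partial>lebesgue)"
proof -
  have A: "{0<..<s} \<subseteq> unitI" "{0<..<s} \<in> sets lebesgue" using s by auto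
  have "P h s \<le> (\<integral>\<^sup>+ u\<in>{0<..<s}. (y + (rearr h u - y)) \<partial>lebesgue)"
    unfolding P_def by (intro nn_integral_mono mult_right_mono) (auto simp: add_diff_self_ennreal)
  also have "\<dots> = y * emeasure lebesgue {0<..<s} + (\<integral>\<^sup>+ u\<in>{0<..<s}. (rearr h u - y) \<partial>lebesgue)"
    by (rule set_nn_const_add[OF A meas01_minus[OF meas01_rearr]])
  also have "\<dots> \<le> ennreal s * y + (\<integral>\<^sup>+ u\<in>unitI. (rearr h u - y) \<partial>lebesgue)"
    using s by (auto simp: mult.commute intro!: add_mono nn_integral_mono mult_left_mono split: split_indicator)
  also have "\<dots> = ennreal s * y + (\<integral>\<^sup>+ t\<in>unitI. (h t - y) \<partial>lebesgue)"
    by (simp add: int_rearr_minus[OF h])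
  finally show ?thesis .
qed

lemma K2:
  assumes h: "meas01 h" and s: "s \<in> unitI"
  shows "ennreal s * rearr h s + (\<integral>\<^sup>+ t\<in>unitI. (h t - rearr h s) \<partial>lebesgue) = P h s"
proof (cases "rearr h s = top")
  case True
  have tt: "rearr h x = top" if "0 < x" "x < s" for x
    using rearr_anti[of x s h] that True by (simp add: top_unique)
  have "top * emeasure lebesgue {0<..<s} \<le> P h s"
    unfolding P_def using tt
    by (subst nn_integral_cmult_indicator[symmetric]) (auto intro!: nn_integral_mono split: split_indicator
        dest: rearr_anti[of _ s h] simp: top_unique)
  then have "P h s = top" using s by (simp add: top_unique ennreal_mult_top)
  moreover have "ennreal s * rearr h s = top" using True s by (simp add: ennreal_mult_top)
  ultimately show ?thesis by simp
next
  case False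
  let ?y = "rearr h s"
  have A: "{0<..<s} \<subseteq> unitI" "{0<..<s} \<in> sets lebesgue" using s by auto
  have "(\<integral>\<^sup>+ t\<in>unitI. (h t - ?y) \<partial>lebesgue) = (\<integral>\<^sup>+ t\<in>unitI. (rearr h t - ?y) \<partial>lebesgue)"
    by (rule int_rearr_minus[OF h])
  also have "\<dots> = (\<integral>\<^sup>+ t\<in>{0<..<s}. (rearr h t - ?y) \<partial>lebesgue)"
  proof (intro nn_integral_cong)
    fix t
    show "(rearr h t - ?y) * indicator unitI t = (rearr h t - ?y) * indicator {0<..<s} t"
    proof (cases "t \<in> unitI \<and> s \<le> t")
      case True
      then have "rearr h t \<le> ?y" by (intro rearr_anti) auto
      then show ?thesis using True False by (simp add: diff_eq_0_iff_ennreal top.not_eq_extremum le_less_trans)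
    next
      case False
      then show ?thesis using s by (auto split: split_indicator)
    qed
  qed
  finally have e1: "(\<integral>\<^sup>+ t\<in>unitI. (h t - ?y) \<partial>lebesgue) = (\<integral>\<^sup>+ t\<in>{0<..<s}. (rearr h t - ?y) \<partial>lebesgue)" .
  have "P h s = (\<integral>\<^sup>+ u\<in>{0<..<s}. (?y + (rearr h u - ?y)) \<partial>lebesgue)"
    unfolding P_def
  proof (intro nn_integral_cong)
    fix u
    show "rearr h u * indicator {0<..<s} u = (?y + (rearr h u - ?y)) * indicator {0<..<s} u"
    proof (cases "u \<in> {0<..<s}")
      case True
      then have "?y \<le> rearr h u" by (intro rearr_anti) auto
      then show ?thesis by (simp add: add_diff_self_ennreal)
    qed simp
  qed
  also have "\<dots> = ?y * emeasure lebesgue {0<..<s} + (\<integral>\<^sup>+ u\<in>{0<..<s}. (rearr h u - ?y) \<partial>lebesgue)"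
    by (rule set_nn_const_add[OF A meas01_minus[OF meas01_rearr]])
  finally show ?thesis using s e1 by (simp add: mult.commute)
qed

lemma P_add:
  assumes f: "meas01 f" and g: "meas01 g" and s: "s \<in> unitI"
  shows "P (\<lambda>t. f t + g t) s \<le> P f s + P g s"
proof -
  let ?a = "rearr f s" and ?b = "rearr g s"
  have "P (\<lambda>t. f t + g t) s \<le> ennreal s * (?a + ?b) + (\<integral>\<^sup>+ t\<in>unitI. ((f t + g t) - (?a + ?b)) \<partial>lebesgue)"
    by (rule K1[OF meas01_add[OF f g] s])
  also have "\<dots> \<le> ennreal s * (?a + ?b) + (\<integral>\<^sup>+ t\<in>unitI. ((f t - ?a) + (g t - ?b)) \<partial>lebesgue)"
    by (intro add_left_mono nn_integral_mono mult_right_mono ennreal_diff_add_le) auto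
  also have "(\<integral>\<^sup>+ t\<in>unitI. ((f t - ?a) + (g t - ?b)) \<partial>lebesgue)
      = (\<integral>\<^sup>+ t\<in>unitI. (f t - ?a) \<partial>lebesgue) + (\<integral>\<^sup>+ t\<in>unitI. (g t - ?b) \<partial>lebesgue)"
    unfolding set_nn_on[OF order_refl]
    using meas01_minus[OF f, of ?a] meas01_minus[OF g, of ?b] unfolding meas01_def
    by (subst nn_integral_add[symmetric])
       (auto simp: distrib_right intro!: nn_integral_cong borel_measurable_times_ennreal borel_measurable_indicator)
  also have "ennreal s * (?a + ?b) + ((\<integral>\<^sup>+ t\<in>unitI. (f t - ?a) \<partial>lebesgue) + (\<integral>\<^sup>+ t\<in>unitI. (g t - ?b) \<partial>lebesgue))
      = (ennreal s * ?a + (\<integral>\<^sup>+ t\<in>unitI. (f t - ?a) \<partial>lebesgue)) + (ennreal s * ?b + (\<integral>\<^sup>+ t\<in>unitI. (g t - ?b) \<partial>lebesgue))"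
    by (simp add: algebra_simps)
  also have "\<dots> = P f s + P g s" using K2[OF f s] K2[OF g s] by simp
  finally show ?thesis .
qed

lemma meas01_monoI:
  fixes g :: "real \<Rightarrow> ennreal"
  assumes mono: "\<And>s t. s \<in> unitI \<Longrightarrow> t \<in> unitI \<Longrightarrow> s \<le> t \<Longrightarrow> g s \<le> g t"
  shows "meas01 g"
  unfolding meas01_def
proof (rule borel_measurableI_greater)
  fix y
  let ?S = "{x \<in> space (lebesgue_on unitI). y < g x}"
  have sp: "space (lebesgue_on unitI) = unitI" by simp
  have "is_interval ?S"
    unfolding is_interval_1 sp
  proof (intro ballI allI impI)
    fix a b x assume a: "a \<in> {x \<in> unitI. y < g x}" and b: "b \<in> {x \<in> unitI. y < g x}" and "a \<le> x \<and> x \<le> b"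
    then have "x \<in> unitI" by auto
    moreover have "g a \<le> g x" using mono[of a x] a \<open>x \<in> unitI\<close> \<open>a \<le> x \<and> x \<le> b\<close> by auto
    ultimately show "x \<in> {x \<in> unitI. y < g x}" using a by auto
  qed
  then have "convex ?S" by (simp add: is_interval_convex_1)
  moreover have "bounded ?S" by (rule bounded_subset[of unitI]) auto
  ultimately have "?S \<in> lmeasurable" by (rule measurable_convex)
  then have "?S \<in> sets lebesgue" by (simp add: fmeasurableD)
  then show "?S \<in> sets (lebesgue_on unitI)"
    by (subst sets_restrict_space_iff) auto
qed

definition Q :: "(real \<Rightarrow> ennreal) \<Rightarrow> real \<Rightarrow> ennreal" where
  "Q h s = P h s / ennreal s"

context Ifun
begin

lemma meas01_SS_any: "meas01 (SS I h)"
proof -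
  have m1: "meas01 (\<lambda>t. SUP s\<in>{0<..t}. ennreal (I s) * h s)"
    by (rule meas01_monoI) (auto intro!: SUP_subset_mono)
  have m2: "meas01 (\<lambda>t. ennreal (I t))"
    by (rule meas01_monoI) (auto intro!: ennreal_leI Imono)
  show ?thesis using m1 m2 unfolding meas01_def SS_def[abs_def]
    by (intro borel_measurable_divide_ennreal) auto
qed

lemma rearr_le_Q:
  assumes s: "0 < s"
  shows "rearr f s \<le> Q f s"
proof -
  have "rearr f s * emeasure lebesgue {0<..<s} \<le> P f s"
    unfolding P_def
    by (subst nn_integral_cmult_indicator[symmetric])
       (auto intro!: nn_integral_mono rearr_anti split: split_indicator)
  then show ?thesis unfolding Q_def using s by (simp add: le_div_iff_ennreal)
qed

lemma S_op_le_R: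
  assumes t: "t \<in> unitI"
  shows "S_op I f t \<le> SS I (Q f) t"
  unfolding S_op_SS by (rule SS_mono) (auto intro: rearr_le_Q)

lemma Q_add:
  assumes f: "meas01 f" and g: "meas01 g" and s: "s \<in> unitI"
  shows "Q (\<lambda>t. f t + g t) s \<le> Q f s + Q g s"
  unfolding Q_def add_divide_distrib_ennreal[symmetric]
  by (intro divide_right_mono_ennreal P_add f g s)

lemma R_add:
  assumes f: "meas01 f" and g: "meas01 g" and t: "t \<in> unitI"
  shows "SS I (Q (\<lambda>t. f t + g t)) t \<le> SS I (Q f) t + SS I (Q g) t"
proof -
  have "SS I (Q (\<lambda>t. f t + g t)) t \<le> SS I (\<lambda>s. Q f s + Q g s) t"
    by (rule SS_mono) (use t in \<open>auto intro!: Q_add f g\<close>)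
  also have "\<dots> \<le> SS I (Q f) t + SS I (Q g) t" by (rule SS_add)
  finally show ?thesis .
qed

lemma P_cmult:
  assumes f: "meas01 f" and a: "0 \<le> a" and s: "s \<in> unitI"
  shows "P (\<lambda>t. ennreal a * f t) s = ennreal a * P f s"
proof -
  have A: "{0<..<s} \<subseteq> unitI" using s by auto
  have As: "{0<..<s} \<in> sets (lebesgue_on unitI)" using A by (simp add: sets_restrict_space_iff)
  have "P (\<lambda>t. ennreal a * f t) s = (\<integral>\<^sup>+u. ennreal a * (rearr f u * indicator {0<..<s} u) \<partial>lebesgue_on unitI)"
    unfolding P_def set_nn_on[OF A] rearr_cmult[OF f a] by (simp add: mult.assoc)
  also have "\<dots> = ennreal a * (\<integral>\<^sup>+u. rearr f u * indicator {0<..<s} u \<partial>lebesgue_on unitI)"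
    using meas01_rearr[of f] As unfolding meas01_def
    by (intro nn_integral_cmult) (auto intro!: borel_measurable_times_ennreal borel_measurable_indicator)
  finally show ?thesis unfolding P_def set_nn_on[OF A] .
qed

lemma R_cmult:
  assumes f: "meas01 f" and a: "0 \<le> a" and t: "t \<in> unitI"
  shows "SS I (Q (\<lambda>t. ennreal a * f t)) t = ennreal a * SS I (Q f) t"
proof -
  have "SS I (Q (\<lambda>t. ennreal a * f t)) t = SS I (\<lambda>s. ennreal a * Q f s) t"
    unfolding SS_def using t
    by (intro arg_cong2[where f="(/)"] SUP_cong refl)
       (auto simp: Q_def P_cmult[OF f a] ennreal_times_divide)
  then show ?thesis by (simp add: SS_cmult)
qed

lemma P_mono:
  assumes f: "meas01 f" and g: "meas01 g" and le: "AE t in lebesgue_on unitI. g t \<le> f t"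
  shows "P g s \<le> P f s"
  unfolding P_def by (intro nn_integral_mono mult_right_mono rearr_mono_AE[OF f g le]) auto

lemma R_mono:
  assumes f: "meas01 f" and g: "meas01 g" and le: "AE t in lebesgue_on unitI. g t \<le> f t"
  shows "SS I (Q g) t \<le> SS I (Q f) t"
  unfolding Q_def by (intro SS_mono divide_right_mono_ennreal P_mono[OF f g le])

lemma P_SUP:
  assumes F: "\<And>n. meas01 (F n)" and f: "meas01 f"
    and conv: "AE t in lebesgue_on unitI. incseq (\<lambda>n. F n t) \<and> (\<lambda>n. F n t) \<longlonglongrightarrow> f t"
    and s: "s \<in> unitI"
  shows "incseq (\<lambda>n. P (F n) s)" and "P f s = (SUP n. P (F n) s)"
proof -
  have A: "{0<..<s} \<subseteq> unitI" using s by auto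
  have As: "{0<..<s} \<in> sets (lebesgue_on unitI)" using A by (simp add: sets_restrict_space_iff)
  have inc: "incseq (\<lambda>n u. rearr (F n) u * indicator {0<..<s} u)"
    using rearr_SUP(1)[OF F f conv] by (auto simp: incseq_def le_fun_def intro!: mult_right_mono)
  show "incseq (\<lambda>n. P (F n) s)"
    using inc unfolding P_def incseq_def le_fun_def by (auto intro!: nn_integral_mono)
  have "P f s = (\<integral>\<^sup>+u. (SUP n. rearr (F n) u * indicator {0<..<s} u) \<partial>lebesgue_on unitI)"
    unfolding P_def set_nn_on[OF A] using rearr_SUP(2)[OF F f conv]
    by (simp add: SUP_mult_right_ennreal)
  also have "\<dots> = (SUP n. \<integral>\<^sup>+u. rearr (F n) u * indicator {0<..<s} u \<partial>lebesgue_on unitI)"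
    using inc meas01_rearr As unfolding meas01_def
    by (intro nn_integral_monotone_convergence_SUP)
       (auto intro!: borel_measurable_times_ennreal borel_measurable_indicator)
  finally show "P f s = (SUP n. P (F n) s)" unfolding P_def set_nn_on[OF A] .
qed

lemma R_SUP:
  assumes F: "\<And>n. meas01 (F n)" and f: "meas01 f"
    and conv: "AE t in lebesgue_on unitI. incseq (\<lambda>n. F n t) \<and> (\<lambda>n. F n t) \<longlonglongrightarrow> f t"
    and t: "t \<in> unitI"
  shows "incseq (\<lambda>n. SS I (Q (F n)) t)" and "SS I (Q f) t = (SUP n. SS I (Q (F n)) t)"
proof -
  have Pi: "incseq (\<lambda>n. P (F n) s)" "P f s = (SUP n. P (F n) s)" if "s \<in> {0<..t}" for s
    using P_SUP[OF F f conv, of s] that t by auto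
  show "incseq (\<lambda>n. SS I (Q (F n)) t)"
    unfolding incseq_def Q_def using Pi(1)
    by (auto intro!: SS_mono divide_right_mono_ennreal simp: incseq_def)
  have "SS I (Q f) t = SS I (\<lambda>s. SUP n. Q (F n) s) t"
    unfolding SS_def using Pi(2)
    by (intro arg_cong2[where f="(/)"] SUP_cong refl) (auto simp: Q_def SUP_divide_ennreal)
  then show "SS I (Q f) t = (SUP n. SS I (Q (F n)) t)" by (simp add: SS_SUP)
qed

lemma Q_rearr: "meas01 f \<Longrightarrow> Q (rearr f) = Q f"
  by (simp add: Q_def P_def rearr_rearr fun_eq_iff)

lemma R_le_S:
  assumes C: "0 \<le> C"
    and H: "\<forall>t\<in>unitI. (\<integral>\<^sup>+ s\<in>{0<..<t}. ennreal (1 / I s) \<partial>lebesgue) \<le> ennreal (C * t / I t)"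
    and t: "t \<in> unitI"
  shows "SS I (Q f) t \<le> ennreal C * S_op I f t"
proof -
  define M where "M s = (SUP u\<in>{0<..s}. ennreal (I u) * rearr f u)" for s
  have phi: "meas01 (\<lambda>u. ennreal (1 / I u))"
  proof (rule meas01_antiI)
    fix s u assume "s \<in> unitI" "u \<in> unitI" "s \<le> u"
    then show "ennreal (1 / I u) \<le> ennreal (1 / I s)"
      using Ipos Imono by (intro ennreal_leI divide_left_mono) (auto intro: mult_pos_pos)
  qed
  have key: "ennreal (I s) * Q f s \<le> ennreal C * M t" if s: "s \<in> {0<..t}" for s
  proof -
    have sI: "s \<in> unitI" using s t by auto
    have A: "{0<..<s} \<subseteq> unitI" using sI by auto
    have As: "{0<..<s} \<in> sets (lebesgue_on unitI)" using A by (simp add: sets_restrict_space_iff)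
    have pw: "rearr f u \<le> M s * ennreal (1 / I u)" if u: "u \<in> {0<..<s}" for u
    proof -
      have uI: "u \<in> unitI" using u sI by auto
      have "ennreal (1 / I u) = 1 / ennreal (I u)"
        using divide_ennreal[of 1 "I u"] Ipos[OF uI] by simp
      then have "M s * ennreal (1 / I u) = M s / ennreal (I u)" by (simp add: ennreal_times_divide)
      moreover have "rearr f u * ennreal (I u) \<le> M s"
        unfolding M_def using u by (subst mult.commute) (intro SUP_upper, auto)
      ultimately show ?thesis using Ipos[OF uI] by (simp add: le_div_iff_ennreal)
    qed
    have "P f s \<le> (\<integral>\<^sup>+u\<in>{0<..<s}. M s * ennreal (1 / I u) \<partial>lebesgue)"
      unfolding P_def using pw by (intro nn_integral_mono) (auto split: split_indicator)
    also have "\<dots> = (\<integral>\<^sup>+u. M s * (ennreal (1 / I u) * indicator {0<..<s} u) \<partial>lebesgue_on unitI)"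
      unfolding set_nn_on[OF A] by (simp add: mult.assoc)
    also have "\<dots> = M s * (\<integral>\<^sup>+u. ennreal (1 / I u) * indicator {0<..<s} u \<partial>lebesgue_on unitI)"
      using phi As unfolding meas01_def
      by (intro nn_integral_cmult) (auto intro!: borel_measurable_times_ennreal borel_measurable_indicator)
    also have "\<dots> \<le> M s * ennreal (C * s / I s)"
    proof -
      have h1: "(\<integral>\<^sup>+u\<in>{0<..<s}. ennreal (1 / I u) \<partial>lebesgue) \<le> ennreal (C * s / I s)"
        using H sI by blast
      show ?thesis using h1 unfolding set_nn_on[OF A] by (intro mult_left_mono) auto
    qed
    finally have Pb: "P f s \<le> M s * ennreal (C * s / I s)" .
    have "ennreal (I s) * Q f s \<le> ennreal (I s) * (M s * ennreal (C * s / I s) / ennreal s)"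
      unfolding Q_def by (intro mult_left_mono divide_right_mono_ennreal Pb) auto
    also have "\<dots> = M s * (ennreal (I s) * ennreal (C * s / I s) / ennreal s)"
      by (simp add: ennreal_times_divide mult.left_commute)
    also have "ennreal (I s) * ennreal (C * s / I s) = ennreal (C * s)"
      using Ipos[OF sI] C sI by (subst ennreal_mult[symmetric]) auto
    also have "ennreal (C * s) / ennreal s = ennreal C"
      using sI C by (subst divide_ennreal) auto
    also have "M s * ennreal C \<le> ennreal C * M t"
      unfolding M_def using s by (subst mult.commute) (intro mult_left_mono SUP_subset_mono, auto)
    finally show ?thesis .
  qed
  have "SS I (Q f) t \<le> (ennreal C * M t) / ennreal (I t)"
    unfolding SS_def by (intro divide_right_mono_ennreal SUP_least key)
  also have "\<dots> = ennreal C * S_op I f t"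
    unfolding S_op_def M_def by (simp add: ennreal_times_divide)
  finally show ?thesis .
qed

end

context Sig
begin

lemma X_cong_on: "meas01 f \<Longrightarrow> meas01 g \<Longrightarrow> (\<And>t. t \<in> unitI \<Longrightarrow> f t = g t) \<Longrightarrow> X f = X g"
  by (rule order.antisym) (auto intro!: X_mono_on)

lemma sig_riq:
  assumes dbl: "\<And>t. t \<in> {0<..<1/2} \<Longrightarrow> I (2*t) \<le> C * I t" and C: "1 \<le> C"
  shows "riq_norm (\<lambda>f. X (S_op I f))"
  unfolding riq_norm_def ri_common_def
proof (intro conjI allI impI)
  show "\<And>f (a::real). meas01 f \<and> 0 \<le> a \<Longrightarrow> X (S_op I (\<lambda>t. ennreal a * f t)) = ennreal a * X (S_op I f)"
    using sig_hom by blast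
  show "\<And>f. meas01 f \<Longrightarrow> X (S_op I f) = 0 \<longleftrightarrow> (AE t in lebesgue_on unitI. f t = 0)"
    using sig_zero by blast
  show "\<And>f g. meas01 f \<and> meas01 g \<and> (AE t in lebesgue_on unitI. g t \<le> f t) \<Longrightarrow> X (S_op I g) \<le> X (S_op I f)"
    using sig_mono by blast
  show "\<And>F f. (\<forall>n. meas01 (F n)) \<and> meas01 f \<and>
        (AE t in lebesgue_on unitI. incseq (\<lambda>n. F n t) \<and> (\<lambda>n. F n t) \<longlonglongrightarrow> f t) \<Longrightarrow>
        incseq (\<lambda>n. X (S_op I (F n)))"
    using sig_fatou by blast
  show "\<And>F f. (\<forall>n. meas01 (F n)) \<and> meas01 f \<and>
        (AE t in lebesgue_on unitI. incseq (\<lambda>n. F n t) \<and> (\<lambda>n. F n t) \<longlonglongrightarrow> f t) \<Longrightarrow>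
        (\<lambda>n. X (S_op I (F n))) \<longlonglongrightarrow> X (S_op I f)"
    using sig_fatou by blast
  show "X (S_op I (indicator unitI)) < \<infinity>" by (rule sig_ind)
  show "\<And>f. meas01 f \<Longrightarrow> X (S_op I f) = X (S_op I (rearr f))" by (rule sig_rearr)
  show "\<exists>C\<ge>1. \<forall>f g. meas01 f \<and> meas01 g \<longrightarrow>
      X (S_op I (\<lambda>t. f t + g t)) \<le> ennreal C * (X (S_op I f) + X (S_op I g))"
    using sig_quasi[OF _ _ C dbl] C by blast
qed

lemma sig_SS: "\<exists>C::real. \<forall>f. meas01 f \<longrightarrow> X (S_op I (S_op I f)) \<le> ennreal C * X (S_op I f)"
  by (rule exI[of _ 1]) (auto intro!: X_mono_on meas01_S_op S_op_S_op)

lemma sig_third: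
  assumes C: "0 \<le> C"
    and H: "\<forall>t\<in>unitI. (\<integral>\<^sup>+ s\<in>{0<..<t}. ennreal (1 / I s) \<partial>lebesgue) \<le> ennreal (C * t / I t)"
  shows "\<exists>\<rho>. ri_norm \<rho> \<and> equiv_norms (\<lambda>f. X (S_op I f)) \<rho>"
proof -
  define \<rho> where "\<rho> f = X (SS I (Q f))" for f
  have mR: "meas01 (SS I (Q f))" for f by (rule meas01_SS_any)
  have lo: "X (S_op I f) \<le> \<rho> f" for f
    unfolding \<rho>_def by (intro X_mono_on meas01_S_op mR S_op_le_R)
  have up: "\<rho> f \<le> ennreal C * X (S_op I f)" for f
  proof -
    have "\<rho> f \<le> X (\<lambda>t. ennreal C * S_op I f t)"
      unfolding \<rho>_def by (intro X_mono_on meas01_cmult meas01_S_op mR R_le_S[OF C H])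
    also have "\<dots> = ennreal C * X (S_op I f)" by (rule X_hom[OF meas01_S_op C])
    finally show ?thesis .
  qed
  have ri: "ri_norm \<rho>"
    unfolding ri_norm_def ri_common_def
  proof (intro conjI allI impI)
    fix f and a :: real assume fa: "meas01 f \<and> 0 \<le> a"
    have "\<rho> (\<lambda>t. ennreal a * f t) = X (\<lambda>t. ennreal a * SS I (Q f) t)"
      unfolding \<rho>_def using fa by (intro X_cong_on mR meas01_cmult R_cmult) auto
    also have "\<dots> = ennreal a * \<rho> f" unfolding \<rho>_def using fa by (intro X_hom mR) auto
    finally show "\<rho> (\<lambda>t. ennreal a * f t) = ennreal a * \<rho> f" .
  next
    fix f assume f: "meas01 f"
    show "\<rho> f = 0 \<longleftrightarrow> (AE t in lebesgue_on unitI. f t = 0)"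
    proof
      assume "\<rho> f = 0"
      then have "X (S_op I f) = 0" using lo[of f] by simp
      then show "AE t in lebesgue_on unitI. f t = 0" using sig_zero[OF f] by simp
    next
      assume "AE t in lebesgue_on unitI. f t = 0"
      then have "X (S_op I f) = 0" using sig_zero[OF f] by simp
      then show "\<rho> f = 0" using up[of f] by simp
    qed
  next
    fix f g assume fg: "meas01 f \<and> meas01 g \<and> (AE t in lebesgue_on unitI. g t \<le> f t)"
    then show "\<rho> g \<le> \<rho> f" unfolding \<rho>_def by (intro X_mono_on mR R_mono) auto
  next
    fix F f assume Ff: "(\<forall>n. meas01 (F n)) \<and> meas01 f \<and>
        (AE t in lebesgue_on unitI. incseq (\<lambda>n. F n t) \<and> (\<lambda>n. F n t) \<longlonglongrightarrow> f t)"
    then have F: "\<And>n. meas01 (F n)" and f: "meas01 f"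
      and conv: "AE t in lebesgue_on unitI. incseq (\<lambda>n. F n t) \<and> (\<lambda>n. F n t) \<longlonglongrightarrow> f t" by auto
    have "incseq (\<lambda>n. X (SS I (Q (F n)))) \<and> (\<lambda>n. X (SS I (Q (F n)))) \<longlonglongrightarrow> X (SS I (Q f))"
    proof (rule X_fatou[OF mR mR], rule AE_I2, rule conjI)
      fix t assume "t \<in> space (lebesgue_on unitI)"
      then have t: "t \<in> unitI" by simp
      show "incseq (\<lambda>n. SS I (Q (F n)) t)" by (rule R_SUP(1)[OF F f conv t])
      then show "(\<lambda>n. SS I (Q (F n)) t) \<longlonglongrightarrow> SS I (Q f) t"
        unfolding R_SUP(2)[OF F f conv t] by (rule LIMSEQ_SUP)
    qed
    then show "incseq (\<lambda>n. \<rho> (F n))" "(\<lambda>n. \<rho> (F n)) \<longlonglongrightarrow> \<rho> f" unfolding \<rho>_def by auto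
  next
    show "\<rho> (indicator unitI) < \<infinity>"
      using up[of "indicator unitI"] sig_ind
      by (auto intro: le_less_trans simp: ennreal_mult_less_top)
  next
    fix f assume f: "meas01 f"
    show "\<rho> f = \<rho> (rearr f)" unfolding \<rho>_def Q_rearr[OF f] ..
  next
    fix f g assume fg: "meas01 f \<and> meas01 g"
    have "\<rho> (\<lambda>t. f t + g t) \<le> X (\<lambda>t. SS I (Q f) t + SS I (Q g) t)"
      unfolding \<rho>_def using fg by (intro X_mono_on mR meas01_add R_add) auto
    also have "\<dots> \<le> \<rho> f + \<rho> g" unfolding \<rho>_def by (intro X_tri mR)
    finally show "\<rho> (\<lambda>t. f t + g t) \<le> \<rho> f + \<rho> g" .
  next
    obtain C0 :: real where C0: "\<forall>f. meas01 f \<longrightarrow> (\<integral>\<^sup>+ t\<in>unitI. f t \<partial>lebesgue) \<le> ennreal C0 * X f"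
      using X_int by blast
    show "\<exists>C::real. \<forall>f. meas01 f \<longrightarrow> (\<integral>\<^sup>+ t\<in>unitI. f t \<partial>lebesgue) \<le> ennreal C * \<rho> f"
    proof (intro exI allI impI)
      fix f assume f: "meas01 f"
      have "X (rearr f) \<le> X (S_op I f)"
        by (intro X_mono_on meas01_S_op meas01_rearr) (simp add: S_op_SS SS_lower)
      then have "X f \<le> \<rho> f" using X_rearr[OF f] lo[of f] by simp
      then show "(\<integral>\<^sup>+ t\<in>unitI. f t \<partial>lebesgue) \<le> ennreal C0 * \<rho> f"
      proof -
        have "(\<integral>\<^sup>+ t\<in>unitI. f t \<partial>lebesgue) \<le> ennreal C0 * X f" using C0 f by blast
        also have "\<dots> \<le> ennreal C0 * \<rho> f" using \<open>X f \<le> \<rho> f\<close> by (rule mult_left_mono) simp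
        finally show ?thesis .
      qed
    qed
  qed
  define C5 where "C5 = max C 1"
  have C5: "0 < C5" "C \<le> C5" unfolding C5_def by auto
  have a: "ennreal (1 / C5) * \<rho> f \<le> X (S_op I f) \<and> X (S_op I f) \<le> ennreal 1 * \<rho> f" for f
  proof
    show "X (S_op I f) \<le> ennreal 1 * \<rho> f" using lo[of f] by simp
    have "ennreal (1 / C5) * \<rho> f \<le> ennreal (1 / C5) * (ennreal C5 * X (S_op I f))"
    proof (rule mult_left_mono)
      have "ennreal C * X (S_op I f) \<le> ennreal C5 * X (S_op I f)"
        using C5(2) by (intro mult_right_mono ennreal_leI) auto
      then show "\<rho> f \<le> ennreal C5 * X (S_op I f)" using up[of f] by (rule order_trans[rotated])
    qed simp
    also have "\<dots> = X (S_op I f)"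
      using C5 by (simp add: mult.assoc[symmetric] ennreal_mult[symmetric])
    finally show "ennreal (1 / C5) * \<rho> f \<le> X (S_op I f)" .
  qed
  have eq: "equiv_norms (\<lambda>f. X (S_op I f)) \<rho>"
    unfolding equiv_norms_def
  proof (rule exI[of _ "1 / C5"], rule exI[of _ "1::real"])
    show "0 < 1 / C5 \<and> (0::real) < 1 \<and> (\<forall>f. meas01 f \<longrightarrow>
       ennreal (1 / C5) * \<rho> f \<le> X (S_op I f) \<and> X (S_op I f) \<le> ennreal 1 * \<rho> f)"
    proof -
      have c1: "0 < 1 / C5" using C5(1) by simp
      have c2: "(0::real) < 1" by simp
      show ?thesis using a c1 c2 by blast
    qed
  qed
  show ?thesis using ri eq by blast
qed

end

theorem theorem3p11:
  fixes I :: "real \<Rightarrow> real" and X :: "(real \<Rightarrow> ennreal) \<Rightarrow> ennreal"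
  assumes I_bij: "bij_betw I {0<..<1} {0<..<1}"
    and I_mono: "mono_on {0<..<1} I"
    and I_doubling: "\<exists>c C. 0 < c \<and> 0 < C \<and>
        (\<forall>t\<in>{0<..<1/2}. c * I t \<le> I (2 * t) \<and> I (2 * t) \<le> C * I t)"
    and X_ri: "ri_norm X"
  shows "riq_norm (\<lambda>f. X (S_op I f))
    \<and> (\<exists>C::real. \<forall>f. meas01 f \<longrightarrow> X (S_op I (S_op I f)) \<le> ennreal C * X (S_op I f))
    \<and> ((\<exists>C::real. \<forall>t\<in>{0<..<1}.
           (\<integral>\<^sup>+ s\<in>{0<..<t}. ennreal (1 / I s) \<partial>lebesgue) \<le> ennreal (C * t / I t))
        \<longrightarrow> (\<exists>\<rho>. ri_norm \<rho> \<and> equiv_norms (\<lambda>f. X (S_op I f)) \<rho>))"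
proof -
  have Ipos: "0 < I t" if "t \<in> unitI" for t
    using bij_betwE[OF I_bij] that by auto
  have Imono: "I s \<le> I t" if "s \<in> unitI" "t \<in> unitI" "s \<le> t" for s t
    using I_mono that unfolding mono_on_def by auto
  interpret Sig I X
    by unfold_locales (auto intro: Ipos Imono X_ri)
  obtain c C where cC: "0 < C" "\<forall>t\<in>{0<..<1/2}. I (2 * t) \<le> C * I t"
    using I_doubling by blast
  define C' where "C' = max C 1"
  have dbl: "I (2*t) \<le> C' * I t" if t: "t \<in> {0<..<1/2}" for t
  proof -
    have "I (2*t) \<le> C * I t" using cC t by auto
    also have "\<dots> \<le> C' * I t" unfolding C'_def using Ipos[of t] t by (intro mult_right_mono) auto
    finally show ?thesis .
  qed
  have C'1: "1 \<le> C'" unfolding C'_def by simp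
  have third: "\<exists>\<rho>. ri_norm \<rho> \<and> equiv_norms (\<lambda>f. X (S_op I f)) \<rho>"
    if H0: "\<exists>C::real. \<forall>t\<in>{0<..<1}. (\<integral>\<^sup>+ s\<in>{0<..<t}. ennreal (1 / I s) \<partial>lebesgue) \<le> ennreal (C * t / I t)"
  proof -
    obtain C3 :: real where C3: "\<forall>t\<in>unitI. (\<integral>\<^sup>+ s\<in>{0<..<t}. ennreal (1 / I s) \<partial>lebesgue) \<le> ennreal (C3 * t / I t)"
      using H0 by blast
    define C4 where "C4 = max C3 0"
    have H: "\<forall>t\<in>unitI. (\<integral>\<^sup>+ s\<in>{0<..<t}. ennreal (1 / I s) \<partial>lebesgue) \<le> ennreal (C4 * t / I t)"
    proof
      fix t assume t: "t \<in> unitI"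
      have "ennreal (C3 * t / I t) \<le> ennreal (C4 * t / I t)"
        unfolding C4_def using t Ipos[OF t]
        by (intro ennreal_leI divide_right_mono mult_right_mono) auto
      then show "(\<integral>\<^sup>+ s\<in>{0<..<t}. ennreal (1 / I s) \<partial>lebesgue) \<le> ennreal (C4 * t / I t)"
        using C3 t by (auto intro: order_trans)
    qed
    show ?thesis by (rule sig_third[OF _ H]) (simp add: C4_def)
  qed
  show ?thesis using sig_riq[OF dbl C'1] sig_SS third by blast
qed

end
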